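(* Let $n \in \mathbb N$ and $F\colon\mathbb R_+^n\to \mathbb R_+$. If $F$ is amenable, monotone and quasi-subadditive with a constant $s \geqslant 1$, then $F$ is $(n)$-b-metric preserving, i.e. $F\in P^n_B$.
   Context: $\mathbb R_+=[0,\infty)$. For $\mathbf a,\mathbf b\in\mathbb R_+^n$, $\mathbf a\preceq\mathbf b$ means $a_i\leqslant b_i$ for all $i$, and $\mathbf a+\mathbf b$ is the coordinatewise sum. $F$ is amenable if $F(\mathbf x)=0\iff\mathbf x=(0,\dots,0)$; monotone if $F(\mathbf a)\leqslant F(\mathbf b)$ whenever $\mathbf a\preceq\mathbf b$; quasi-subadditive with constant $s\geqslant1$ if $F(\mathbf a+\mathbf b)\leqslant s(F(\mathbf a)+F(\mathbf b))$ for all $\mathbf a,\mathbf b\in\mathbb R_+^n$. A b-metric on $X$ is $d\colon X^2\to\mathbb R_+$ with $d(x,y)=0\iff x=y$, $d(x,y)=d(y,x)$, and for some $K\geqslant1$, $d(x,z)\leqslant K(d(x,y)+d(y,z))$ for all $x,y,z$. $P^n_B$ is the set of $F$ such that for every collection of b-metric spaces $(X_i,d_i)$, $i=1,\dots,n$ (arbitrary constants), the function $D(\mathbf x,\mathbf y)=F(d_1(x_1,y_1),\dots,d_n(x_n,y_n))$ on $\prod_{i=1}^nX_i$ is a b-metric. *)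

theory Defs
  imports "HOL-Analysis.Analysis"
begin

definition b_metric_on :: "'a set \<Rightarrow> ('a \<Rightarrow> 'a \<Rightarrow> real) \<Rightarrow> bool" where
  "b_metric_on X d \<longleftrightarrow>
     (\<forall>x\<in>X. \<forall>y\<in>X. d x y \<ge> 0) \<and>
     (\<forall>x\<in>X. \<forall>y\<in>X. d x y = 0 \<longleftrightarrow> x = y) \<and>
     (\<forall>x\<in>X. \<forall>y\<in>X. d x y = d y x) \<and>
     (\<exists>K\<ge>1. \<forall>x\<in>X. \<forall>y\<in>X. \<forall>z\<in>X. d x z \<le> K * (d x y + d y z))"

text \<open>Vectors in R_+^n, indexed by a finite type 'n with CARD('n) = n.\<close>
definition nonneg_vec :: "real^'n \<Rightarrow> bool" where
  "nonneg_vec a \<longleftrightarrow> (\<forall>i. 0 \<le> a $ i)"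

definition amenable :: "(real^'n \<Rightarrow> real) \<Rightarrow> bool" where
  "amenable F \<longleftrightarrow> (\<forall>x. nonneg_vec x \<longrightarrow> (F x = 0 \<longleftrightarrow> x = 0))"

definition monotone_F :: "(real^'n \<Rightarrow> real) \<Rightarrow> bool" where
  "monotone_F F \<longleftrightarrow> (\<forall>a b. nonneg_vec a \<and> nonneg_vec b \<and> (\<forall>i. a $ i \<le> b $ i) \<longrightarrow> F a \<le> F b)"

definition quasi_subadditive :: "real \<Rightarrow> (real^'n \<Rightarrow> real) \<Rightarrow> bool" where
  "quasi_subadditive s F \<longleftrightarrow> s \<ge> 1 \<and>
     (\<forall>a b. nonneg_vec a \<and> nonneg_vec b \<longrightarrow> F (a + b) \<le> s * (F a + F b))"

text \<open>F is (n)-b-metric preserving (F \<in> P^n_B), for b-metric spaces whose carriers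
  live in the type 'a (the type is universally quantified at the theorem level).\<close>
definition b_metric_preserving :: "'a itself \<Rightarrow> (real^'n \<Rightarrow> real) \<Rightarrow> bool" where
  "b_metric_preserving _ F \<longleftrightarrow>
     (\<forall>(X :: 'n \<Rightarrow> 'a set) (d :: 'n \<Rightarrow> 'a \<Rightarrow> 'a \<Rightarrow> real).
        (\<forall>i. b_metric_on (X i) (d i)) \<longrightarrow>
        b_metric_on {x :: 'a^'n. \<forall>i. x $ i \<in> X i}
                    (\<lambda>x y. F (\<chi> i. d i (x $ i) (y $ i))))"

end

theory Submission
  imports Defs
begin

lemma scale_pow2:
  fixes F :: "real^'n \<Rightarrow> real"
  assumes "quasi_subadditive s F" "nonneg_vec v"
  shows "F ((2::real)^m *\<^sub>R v) \<le> (2 * s)^m * F v"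
proof (induction m)
  case 0 then show ?case by simp
next
  case (Suc m)
  have nn: "nonneg_vec ((2::real)^m *\<^sub>R v)" using assms(2) by (simp add: nonneg_vec_def)
  have s: "s \<ge> 1" using assms(1) by (simp add: quasi_subadditive_def)
  have "F ((2::real)^Suc m *\<^sub>R v) = F ((2::real)^m *\<^sub>R v + (2::real)^m *\<^sub>R v)"
    by (metis mult_2 power_Suc scaleR_add_left scaleR_scaleR)
  also have "\<dots> \<le> s * (F ((2::real)^m *\<^sub>R v) + F ((2::real)^m *\<^sub>R v))"
    using assms(1) nn unfolding quasi_subadditive_def by blast
  also have "\<dots> \<le> s * ((2 * s)^m * F v + (2 * s)^m * F v)"
    using Suc s by (intro mult_left_mono add_mono) auto
  also have "\<dots> = (2 * s)^Suc m * F v" by (simp add: algebra_simps)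
  finally show ?case .
qed

theorem proposition3p1:
  fixes F :: "real^'n \<Rightarrow> real" and s :: real
  assumes "\<forall>x. nonneg_vec x \<longrightarrow> F x \<ge> 0"
    and "amenable F"
    and "monotone_F F"
    and "quasi_subadditive s F"
  shows "b_metric_preserving TYPE('a) F"
  unfolding b_metric_preserving_def
proof (intro allI impI)
  fix X :: "'n \<Rightarrow> 'a set" and d :: "'n \<Rightarrow> 'a \<Rightarrow> 'a \<Rightarrow> real"
  assume bm: "\<forall>i. b_metric_on (X i) (d i)"
  define Y where "Y = {x :: 'a^'n. \<forall>i. x $ i \<in> X i}"
  define V where "V = (\<lambda>x y :: 'a^'n. (\<chi> i. d i (x $ i) (y $ i)) :: real^'n)"
  have s1: "s \<ge> 1" using assms(4) by (simp add: quasi_subadditive_def)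
  have nonneg: "nonneg_vec (V x y)" if "x \<in> Y" "y \<in> Y" for x y
    using that bm unfolding V_def Y_def nonneg_vec_def b_metric_on_def by auto
  have "\<forall>i. \<exists>K\<ge>1. \<forall>x\<in>X i. \<forall>y\<in>X i. \<forall>z\<in>X i. d i x z \<le> K * (d i x y + d i y z)"
    using bm unfolding b_metric_on_def by blast
  then obtain K where K: "\<And>i. K i \<ge> 1"
    "\<And>i x y z. x \<in> X i \<Longrightarrow> y \<in> X i \<Longrightarrow> z \<in> X i \<Longrightarrow> d i x z \<le> K i * (d i x y + d i y z)"
    by metis
  define KS where "KS = (\<Sum>i\<in>UNIV. K i)"
  have KS: "K i \<le> KS" for i
    unfolding KS_def using K(1) by (intro member_le_sum) (auto intro: order_trans[OF zero_le_one])
  obtain m where m: "KS < (2::real)^m" using real_arch_pow[of 2 KS] by auto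
  define C where "C = (2 * s)^m * s"
  have C1: "C \<ge> 1" unfolding C_def using s1
  proof -
    have "(1::real) \<le> (2 * s)^m" using s1 by (intro one_le_power) simp
    then show "1 \<le> (2 * s)^m * s" using s1 by (metis mult_mono' mult_1 zero_le_one)
  qed
  have tri: "F (V x z) \<le> C * (F (V x y) + F (V y z))" if xyz: "x \<in> Y" "y \<in> Y" "z \<in> Y" for x y z
  proof -
    have nab: "nonneg_vec (V x y + V y z)" using nonneg[OF xyz(1,2)] nonneg[OF xyz(2,3)]
      by (simp add: nonneg_vec_def)
    have le: "V x z $ i \<le> ((2::real)^m *\<^sub>R (V x y + V y z)) $ i" for i
    proof -
      have a: "d i (x$i) (y$i) \<ge> 0" "d i (y$i) (z$i) \<ge> 0"
        using xyz bm unfolding Y_def b_metric_on_def by auto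
      have "d i (x$i) (z$i) \<le> K i * (d i (x$i) (y$i) + d i (y$i) (z$i))"
        using K(2) xyz unfolding Y_def by auto
      also have "\<dots> \<le> 2^m * (d i (x$i) (y$i) + d i (y$i) (z$i))"
        using KS[of i] m a by (intro mult_right_mono) auto
      finally show ?thesis by (simp add: V_def)
    qed
    have n2: "nonneg_vec ((2::real)^m *\<^sub>R (V x y + V y z))" using nab by (simp add: nonneg_vec_def)
    have "F (V x z) \<le> F ((2::real)^m *\<^sub>R (V x y + V y z))"
      using assms(3) nonneg[OF xyz(1,3)] n2 le unfolding monotone_F_def by blast
    also have "\<dots> \<le> (2 * s)^m * F (V x y + V y z)" by (rule scale_pow2[OF assms(4) nab])
    also have "\<dots> \<le> (2 * s)^m * (s * (F (V x y) + F (V y z)))"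
      using assms(4) nonneg[OF xyz(1,2)] nonneg[OF xyz(2,3)] s1
      by (intro mult_left_mono) (auto simp: quasi_subadditive_def)
    finally show ?thesis by (simp add: C_def algebra_simps)
  qed
  have zero: "F (V x y) = 0 \<longleftrightarrow> x = y" if "x \<in> Y" "y \<in> Y" for x y
  proof -
    have "F (V x y) = 0 \<longleftrightarrow> V x y = 0" using assms(2) nonneg[OF that] by (simp add: amenable_def)
    also have "\<dots> \<longleftrightarrow> (\<forall>i. d i (x$i) (y$i) = 0)" by (simp add: V_def vec_eq_iff)
    also have "\<dots> \<longleftrightarrow> (\<forall>i. x$i = y$i)" using that bm unfolding Y_def b_metric_on_def by auto
    also have "\<dots> \<longleftrightarrow> x = y" by (simp add: vec_eq_iff)
    finally show ?thesis .
  qed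
  have sym: "V x y = V y x" if "x \<in> Y" "y \<in> Y" for x y
    using that bm unfolding V_def Y_def b_metric_on_def by (auto simp: vec_eq_iff)
  have "b_metric_on Y (\<lambda>x y. F (V x y))"
    unfolding b_metric_on_def
  proof (intro conjI)
    show "\<exists>K\<ge>1. \<forall>x\<in>Y. \<forall>y\<in>Y. \<forall>z\<in>Y. F (V x z) \<le> K * (F (V x y) + F (V y z))"
      using tri C1 by blast
  qed (use assms(1) nonneg zero sym in auto)
  then show "b_metric_on {x :: 'a^'n. \<forall>i. x $ i \<in> X i} (\<lambda>x y. F (\<chi> i. d i (x $ i) (y $ i)))"
    by (simp add: Y_def V_def)
qed

end
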